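(* There is an absolute constant $\kappa>0$ such that for every set $C$ of concepts over $\{0,1\}^n$ with $|C|\ge2$, every quantum network that exactly learns $C$ from quantum membership queries (i.e. for every $c\in C$, when its oracle gates are $QMQ_c$, it outputs with probability at least $2/3$ a representation of a Boolean circuit $h$ with $h(x)=c(x)$ for all $x$) has query complexity at least $\kappa\,(1/\hat\gamma^{C})^{1/2}$. In other words, any quantum exact learning algorithm for $C$ has sample complexity $\Omega((1/\hat\gamma^C)^{1/2})$.
   Context: For $C'\subseteq C$, $a\in\{0,1\}^n$, $b\in\{0,1\}$: $C'_{\langle a,b\rangle}=\{c\in C': c(a)=b\}$, $\gamma^{C'}_{\langle a,b\rangle}=|C'_{\langle a,b\rangle}|/|C'|$, $\gamma^{C'}_a=\min_b\gamma^{C'}_{\langle a,b\rangle}$, $\gamma^{C'}=\max_a\gamma^{C'}_a$, and $\hat\gamma^{C}=\min_{C'\subseteq C,|C'|\ge2}\gamma^{C'}$. A quantum network on an $m$-qubit register is a sequence $U_0,O_1,U_1,\dots,O_T,U_T$ of unitaries applied to $|0^m\rangle$, the $U_i$ arbitrary fixed unitaries and each $O_i$ an oracle gate, followed by a computational-basis measurement of some qubits whose outcome is the output; $T$ is the query complexity. The gate $QMQ_c$ maps $|x,b,y\rangle$ to $|x,b\oplus c(x),y\rangle$ for $x\in\{0,1\}^n$, $b\in\{0,1\}$. *)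

theory Defs
  imports Complex_Main "Jordan_Normal_Form.Matrix"
begin

text \<open>Inputs x in {0,1}^n are encoded as naturals x < 2^n (binary expansion).
 A concept over {0,1}^n is a function c :: nat => bool with c x = False for x >= 2^n.\<close>

definition concepts :: "nat \<Rightarrow> (nat \<Rightarrow> bool) set" where
  "concepts n = {c. \<forall>x. 2^n \<le> x \<longrightarrow> \<not> c x}"

definition gamma_ab :: "(nat \<Rightarrow> bool) set \<Rightarrow> nat \<Rightarrow> bool \<Rightarrow> real" where
  "gamma_ab C' a b = real (card {c \<in> C'. c a = b}) / real (card C')"

definition gamma_a :: "(nat \<Rightarrow> bool) set \<Rightarrow> nat \<Rightarrow> real" where
  "gamma_a C' a = min (gamma_ab C' a False) (gamma_ab C' a True)"

definition gamma :: "nat \<Rightarrow> (nat \<Rightarrow> bool) set \<Rightarrow> real" where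
  "gamma n C' = Max {gamma_a C' a | a. a < 2^n}"

definition gamma_hat :: "nat \<Rightarrow> (nat \<Rightarrow> bool) set \<Rightarrow> real" where
  "gamma_hat n C = Min {gamma n C' | C'. C' \<subseteq> C \<and> 2 \<le> card C'}"

text \<open>Quantum states on an m-qubit register: complex vectors of dimension 2^m, basis index
 i < 2^m is the bit string of i written with m bits, most significant bit first.\<close>

definition mat_adj :: "complex mat \<Rightarrow> complex mat" where
  "mat_adj U = mat (dim_col U) (dim_row U) (\<lambda>(i,j). cnj (U $$ (j,i)))"

definition unitary_on :: "nat \<Rightarrow> complex mat \<Rightarrow> bool" where
  "unitary_on N U \<longleftrightarrow> U \<in> carrier_mat N N \<and> U * mat_adj U = 1\<^sub>m N \<and> mat_adj U * U = 1\<^sub>m N"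

text \<open>Basis index of |x,b,y> with x the first n qubits, b the next qubit, y the remaining
 m-n-1 qubits:  i = x * 2^(m-n) + b * 2^(m-n-1) + y.  QMQ_c maps |x,b,y> to |x, b xor c(x), y>.\<close>

definition qmq_perm :: "nat \<Rightarrow> nat \<Rightarrow> (nat \<Rightarrow> bool) \<Rightarrow> nat \<Rightarrow> nat" where
  "qmq_perm m n c i =
     (let x = i div 2^(m-n); b = (i div 2^(m-n-1)) mod 2 in
      if c x then (if b = 0 then i + 2^(m-n-1) else i - 2^(m-n-1)) else i)"

definition QMQ :: "nat \<Rightarrow> nat \<Rightarrow> (nat \<Rightarrow> bool) \<Rightarrow> complex mat" where
  "QMQ m n c = mat (2^m) (2^m) (\<lambda>(i,j). if i = qmq_perm m n c j then 1 else 0)"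

text \<open>A network U_0, O_1, U_1, ..., O_T, U_T is given by the list Us = [U_0, ..., U_T]
 (so T = length Us - 1); each oracle gate O_i is QMQ_c.  Final state before measurement:\<close>

definition final_state :: "nat \<Rightarrow> nat \<Rightarrow> (nat \<Rightarrow> bool) \<Rightarrow> complex mat list \<Rightarrow> complex vec" where
  "final_state m n c Us =
     foldl (\<lambda>v U. U *\<^sub>v (QMQ m n c *\<^sub>v v)) (hd Us *\<^sub>v unit_vec (2^m) 0) (tl Us)"

definition valid_network :: "nat \<Rightarrow> nat \<Rightarrow> complex mat list \<Rightarrow> bool" where
  "valid_network m n Us \<longleftrightarrow> n < m \<and> Us \<noteq> [] \<and> (\<forall>U \<in> set Us. unitary_on (2^m) U)"

definition queries :: "complex mat list \<Rightarrow> nat" where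
  "queries Us = length Us - 1"

text \<open>Success probability: the register is measured in the computational basis; outcome i
 is decoded (dec) into the hypothesis h = dec i represented by the output.\<close>
definition success_prob ::
  "nat \<Rightarrow> nat \<Rightarrow> (nat \<Rightarrow> bool) \<Rightarrow> complex mat list \<Rightarrow> (nat \<Rightarrow> nat \<Rightarrow> bool) \<Rightarrow> real" where
  "success_prob m n c Us dec =
     (\<Sum>i<2^m. if (\<forall>x<2^n. dec i x = c x) then (cmod (final_state m n c Us $ i))\<^sup>2 else 0)"

definition exactly_learns ::
  "nat \<Rightarrow> (nat \<Rightarrow> bool) set \<Rightarrow> nat \<Rightarrow> complex mat list \<Rightarrow> (nat \<Rightarrow> nat \<Rightarrow> bool) \<Rightarrow> bool" where
  "exactly_learns n C m Us dec \<longleftrightarrow>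
     valid_network m n Us \<and> (\<forall>c \<in> C. success_prob m n c Us dec \<ge> 2/3)"

end

theory Submission
  imports Defs "HOL-Analysis.L2_Norm"
begin


lemma ev_aux: "even (j::nat) \<Longrightarrow> (j+1) div 2 = j div 2" by presburger
lemma odd_aux: "odd (j::nat) \<Longrightarrow> j \<ge> 1 \<and> even (j-1) \<and> (j-1) div 2 = j div 2" by presburger

lemma swK:
  fixes K i :: nat
  assumes K: "K > 0"
  defines "s \<equiv> \<lambda>i. if even (i div K) then i + K else i - K"
  shows "s i div (K*2) = i div (K*2) \<and> s (s i) = i"
proof (cases "even (i div K)")
  case True
  have d: "(i + K) div K = i div K + 1" using K by (metis div_add_self2 less_not_refl2)
  have s: "s i = i + K" using True unfolding s_def by simp
  have "s (i+K) = i" unfolding s_def using d True by simp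
  moreover have "(i div K + 1) div 2 = i div K div 2" using True by (rule ev_aux)
  ultimately show ?thesis using s d by (simp add: div_mult2_eq)
next
  case False
  note o = odd_aux[OF False]
  have iK: "i \<ge> K"
  proof (rule ccontr)
    assume "\<not> K \<le> i" then have "i div K = 0" by simp
    with o show False by simp
  qed
  have s: "s i = i - K" using False unfolding s_def by simp
  have d: "(i - K) div K = i div K - 1"
  proof -
    have "i = (i - K) + K" using iK by simp
    hence "i div K = (i - K) div K + 1" using K by (metis div_add_self2 less_not_refl2)
    thus ?thesis by simp
  qed
  have "s (i-K) = i" unfolding s_def using d o iK False by simp
  thus ?thesis using s d o by (simp add: div_mult2_eq)
qed

definition sw :: "nat \<Rightarrow> nat \<Rightarrow> nat \<Rightarrow> nat" where
  "sw m n i = (if even (i div 2^(m-n-1)) then i + 2^(m-n-1) else i - 2^(m-n-1))"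

lemma pow_split: "n < m \<Longrightarrow> (2::nat)^(m-n) = 2^(m-n-1) * 2"
  by (metis Suc_diff_Suc diff_Suc_1 mult.commute power_Suc zero_less_diff)

lemma qmq_perm_sw: "n < m \<Longrightarrow> qmq_perm m n c i = (if c (i div 2^(m-n)) then sw m n i else i)"
  unfolding qmq_perm_def sw_def Let_def
  by (simp add: div_mult2_eq pow_split even_iff_mod_2_eq_zero)

lemma sw_props:
  assumes "n < m"
  shows "sw m n i div 2^(m-n) = i div 2^(m-n) \<and> sw m n (sw m n i) = i"
  using swK[of "2^(m-n-1)" i] unfolding pow_split[OF assms] sw_def by simp

lemma pow_m: "n < m \<Longrightarrow> (2::nat)^m = 2^n * 2^(m-n)"
  by (simp add: power_add[symmetric])

lemma div_lt: "n < m \<Longrightarrow> i < 2^m \<Longrightarrow> i div 2^(m-n) < (2::nat)^n"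
  by (simp add: div_less_iff_less_mult pow_m)

lemma sw_lt: assumes "n < m" "i < 2^m" shows "sw m n i < 2^m"
proof -
  have "sw m n i div 2^(m-n) < 2^n" using sw_props[OF assms(1)] div_lt[OF assms] by simp
  thus ?thesis by (simp add: div_less_iff_less_mult pow_m[OF assms(1)])
qed

lemma perm_props:
  assumes "n < m" "i < 2^m"
  shows "qmq_perm m n c i < 2^m" "qmq_perm m n c (qmq_perm m n c i) = i"
    "qmq_perm m n c i div 2^(m-n) = i div 2^(m-n)"
  using sw_props[OF assms(1), of i] sw_lt[OF assms] assms
  by (auto simp: qmq_perm_sw)

lemma perm_bij: "n < m \<Longrightarrow> bij_betw (qmq_perm m n c) {..<2^m} {..<2^m}"
  by (rule bij_betw_byWitness[where f'="qmq_perm m n c"]) (auto simp: perm_props)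

lemma qmq_apply:
  assumes nm: "n < m" and v: "v \<in> carrier_vec (2^m)" and i: "i < 2^m"
  shows "(QMQ m n c *\<^sub>v v) $ i = v $ (qmq_perm m n c i)"
proof -
  have "(QMQ m n c *\<^sub>v v) $ i = (\<Sum>j\<in>{0..<2^m}. (if i = qmq_perm m n c j then 1 else 0) * v $ j)"
    using i v by (simp add: QMQ_def scalar_prod_def)
  also have "\<dots> = (\<Sum>j\<in>{0..<2^m}. (if j = qmq_perm m n c i then v $ j else 0))"
  proof (rule sum.cong)
    fix j :: nat assume j: "j \<in> {0..<2^m}"
    have "(i = qmq_perm m n c j) = (j = qmq_perm m n c i)"
      using perm_props[OF nm] i j by auto
    thus "(if i = qmq_perm m n c j then 1 else 0) * v $ j = (if j = qmq_perm m n c i then v $ j else 0)"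
      by simp
  qed simp
  also have "\<dots> = v $ (qmq_perm m n c i)" using perm_props(1)[OF nm i] by simp
  finally show ?thesis .
qed

lemma QMQ_carrier[simp]: "QMQ m n c \<in> carrier_mat (2^m) (2^m)"
  by (simp add: QMQ_def)

lemma QMQ_dim[simp]: "dim_row (QMQ m n c) = 2^m" "dim_col (QMQ m n c) = 2^m"
  by (simp_all add: QMQ_def)

abbreviation nv :: "nat \<Rightarrow> complex vec \<Rightarrow> real" where
  "nv N v \<equiv> L2_set (\<lambda>i. cmod (v $ i)) {..<N}"

lemma unitary_sumsq:
  assumes U: "unitary_on N U" and v: "v \<in> carrier_vec N"
  shows "(\<Sum>i<N. (cmod ((U *\<^sub>v v) $ i))\<^sup>2) = (\<Sum>i<N. (cmod (v $ i))\<^sup>2)"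
proof -
  have Uc: "U \<in> carrier_mat N N" and I: "mat_adj U * U = 1\<^sub>m N" using U unfolding unitary_on_def by auto
  have Uv: "\<And>i. i < N \<Longrightarrow> (U *\<^sub>v v) $ i = (\<Sum>j<N. U $$ (i,j) * v $ j)"
    using Uc v by (auto simp: scalar_prod_def atLeast0LessThan intro!: sum.cong)
  have delta: "\<And>k j. k < N \<Longrightarrow> j < N \<Longrightarrow> (\<Sum>i<N. cnj (U $$ (i,k)) * U $$ (i,j)) = (if k = j then 1 else 0)"
  proof -
    fix k j assume k: "k < N" and j: "j < N"
    have "(mat_adj U * U) $$ (k,j) = (\<Sum>i<N. cnj (U $$ (i,k)) * U $$ (i,j))"
      using Uc k j by (simp add: mat_adj_def scalar_prod_def atLeast0LessThan)
    thus "(\<Sum>i<N. cnj (U $$ (i,k)) * U $$ (i,j)) = (if k = j then 1 else 0)"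
      using I k j by simp
  qed
  have "complex_of_real (\<Sum>i<N. (cmod ((U *\<^sub>v v) $ i))\<^sup>2)
      = (\<Sum>i<N. (U *\<^sub>v v) $ i * cnj ((U *\<^sub>v v) $ i))"
    by (simp only: of_real_sum complex_norm_square)
  also have "\<dots> = (\<Sum>i<N. (\<Sum>j<N. U $$ (i,j) * v $ j) * cnj (\<Sum>k<N. U $$ (i,k) * v $ k))"
    by (rule sum.cong) (simp_all add: Uv)
  also have "\<dots> = (\<Sum>i<N. \<Sum>k<N. \<Sum>j<N. (v $ j * cnj (v $ k)) * (cnj (U $$ (i,k)) * U $$ (i,j)))"
    by (simp add: sum_distrib_left sum_distrib_right mult_ac)
  also have "\<dots> = (\<Sum>k<N. \<Sum>i<N. \<Sum>j<N. (v $ j * cnj (v $ k)) * (cnj (U $$ (i,k)) * U $$ (i,j)))"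
    by (rule sum.swap)
  also have "\<dots> = (\<Sum>k<N. \<Sum>j<N. \<Sum>i<N. (v $ j * cnj (v $ k)) * (cnj (U $$ (i,k)) * U $$ (i,j)))"
    by (rule sum.cong[OF refl], rule sum.swap)
  also have "\<dots> = (\<Sum>k<N. \<Sum>j<N. (v $ j * cnj (v $ k)) * (\<Sum>i<N. cnj (U $$ (i,k)) * U $$ (i,j)))"
    by (simp add: sum_distrib_left)
  also have "\<dots> = (\<Sum>k<N. \<Sum>j<N. (if k = j then v $ j * cnj (v $ k) else 0))"
    by (intro sum.cong refl) (simp add: delta)
  also have "\<dots> = (\<Sum>j<N. v $ j * cnj (v $ j))" by simp
  also have "\<dots> = complex_of_real (\<Sum>i<N. (cmod (v $ i))\<^sup>2)"
    by (simp only: of_real_sum complex_norm_square)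
  finally show ?thesis by (simp only: of_real_eq_iff)
qed

lemma unitary_nv: "unitary_on N U \<Longrightarrow> v \<in> carrier_vec N \<Longrightarrow> nv N (U *\<^sub>v v) = nv N v"
  unfolding L2_set_def using unitary_sumsq by simp

definition PS :: "nat \<Rightarrow> nat \<Rightarrow> (nat \<Rightarrow> bool) \<Rightarrow> complex vec \<Rightarrow> real" where
  "PS m n S v = L2_set (\<lambda>i. if S (i div 2^(m-n)) then cmod (v $ i) else 0) {..<2^m}"

lemma perm_L2: assumes "n < m" shows "L2_set (\<lambda>i. g (qmq_perm m n c i)) {..<2^m} = L2_set g {..<2^m}"
  unfolding L2_set_def using sum.reindex_bij_betw[OF perm_bij[OF assms, of c], where g="\<lambda>i. (g i)\<^sup>2"] by simp

lemma oracle_step: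
  assumes nm: "n < m" and a: "a \<in> carrier_vec (2^m)" and b: "b \<in> carrier_vec (2^m)"
  shows "nv (2^m) (QMQ m n c *\<^sub>v a - QMQ m n f *\<^sub>v b)
     \<le> nv (2^m) (a - b) + 2 * PS m n (\<lambda>x. c x \<noteq> f x) b"
proof -
  note index_mult_mat_vec[simp del]
  let ?N = "2^m::nat"
  let ?p = "qmq_perm m n c" and ?q = "qmq_perm m n f" and ?s = "qmq_perm m n (\<lambda>_. True)"
  let ?S = "\<lambda>x. c x \<noteq> f x"
  let ?X = "\<lambda>i::nat. i div 2^(m-n)"
  have comp: "\<And>i. i < ?N \<Longrightarrow> (QMQ m n c *\<^sub>v a - QMQ m n f *\<^sub>v b) $ i
      = (a $ (?p i) - b $ (?p i)) + (b $ (?p i) - b $ (?q i))"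
    using a b nm qmq_apply[OF nm a] qmq_apply[OF nm b] by (simp del: index_mult_mat_vec)
  have "nv ?N (QMQ m n c *\<^sub>v a - QMQ m n f *\<^sub>v b)
      \<le> L2_set (\<lambda>i. cmod (a $ (?p i) - b $ (?p i)) + cmod (b $ (?p i) - b $ (?q i))) {..<?N}"
  proof (rule L2_set_mono)
    fix i assume "i \<in> {..<?N}" hence i: "i < ?N" by simp
    show "cmod ((QMQ m n c *\<^sub>v a - QMQ m n f *\<^sub>v b) $ i)
      \<le> cmod (a $ (?p i) - b $ (?p i)) + cmod (b $ (?p i) - b $ (?q i))"
      unfolding comp[OF i] by (rule norm_triangle_ineq)
  qed simp
  also have "\<dots> \<le> L2_set (\<lambda>i. cmod (a $ (?p i) - b $ (?p i))) {..<?N}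
      + L2_set (\<lambda>i. cmod (b $ (?p i) - b $ (?q i))) {..<?N}"
    by (rule L2_set_triangle_ineq)
  also have "L2_set (\<lambda>i. cmod (a $ (?p i) - b $ (?p i))) {..<?N} = nv ?N (a - b)"
  proof -
    have "L2_set (\<lambda>i. cmod (a $ (?p i) - b $ (?p i))) {..<?N}
        = L2_set (\<lambda>i. cmod ((a - b) $ (?p i))) {..<?N}"
      by (rule L2_set_cong) (use a b nm perm_props in auto)
    also have "\<dots> = nv ?N (a - b)" by (rule perm_L2[OF nm])
    finally show ?thesis .
  qed
  also have "L2_set (\<lambda>i. cmod (b $ (?p i) - b $ (?q i))) {..<?N}
      \<le> L2_set (\<lambda>i. (if ?S (?X i) then cmod (b $ i) else 0) + (if ?S (?X i) then cmod (b $ (?s i)) else 0)) {..<?N}"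
  proof (rule L2_set_mono)
    fix i assume "i \<in> {..<?N}"
    show "cmod (b $ (?p i) - b $ (?q i))
       \<le> (if ?S (?X i) then cmod (b $ i) else 0) + (if ?S (?X i) then cmod (b $ (?s i)) else 0)"
      using nm norm_triangle_ineq4[of "b $ sw m n i" "b $ i"] norm_triangle_ineq4[of "b $ i" "b $ sw m n i"]
      by (auto simp: qmq_perm_sw)
  qed simp
  also have "\<dots> \<le> PS m n ?S b + L2_set (\<lambda>i. if ?S (?X i) then cmod (b $ (?s i)) else 0) {..<?N}"
    unfolding PS_def by (rule L2_set_triangle_ineq)
  also have "L2_set (\<lambda>i. if ?S (?X i) then cmod (b $ (?s i)) else 0) {..<?N} = PS m n ?S b"
  proof -
    have "L2_set (\<lambda>i. if ?S (?X i) then cmod (b $ (?s i)) else 0) {..<?N}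
       = L2_set (\<lambda>i. if ?S (?X (?s i)) then cmod (b $ (?s i)) else 0) {..<?N}"
      by (rule L2_set_cong) (use nm perm_props(3) in auto)
    also have "\<dots> = PS m n ?S b" unfolding PS_def by (rule perm_L2[OF nm])
    finally show ?thesis .
  qed
  finally show ?thesis by simp
qed


lemma QMQ_nv: assumes nm: "n < m" and v: "v \<in> carrier_vec (2^m)"
  shows "nv (2^m) (QMQ m n c *\<^sub>v v) = nv (2^m) v"
proof -
  have "nv (2^m) (QMQ m n c *\<^sub>v v) = L2_set (\<lambda>i. cmod (v $ (qmq_perm m n c i))) {..<2^m}"
    by (rule L2_set_cong) (use qmq_apply[OF nm v] in auto)
  also have "\<dots> = nv (2^m) v" by (rule perm_L2[OF nm])
  finally show ?thesis .
qed

fun sts :: "(nat \<Rightarrow> bool) \<Rightarrow> nat \<Rightarrow> nat \<Rightarrow> complex vec \<Rightarrow> complex mat list \<Rightarrow> complex vec list" where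
  "sts f m n v [] = []"
| "sts f m n v (U # Us) = v # sts f m n (U *\<^sub>v (QMQ m n f *\<^sub>v v)) Us"

abbreviation run :: "(nat \<Rightarrow> bool) \<Rightarrow> nat \<Rightarrow> nat \<Rightarrow> complex vec \<Rightarrow> complex mat list \<Rightarrow> complex vec" where
  "run f m n v Us \<equiv> foldl (\<lambda>v U. U *\<^sub>v (QMQ m n f *\<^sub>v v)) v Us"

lemma run_props:
  assumes nm: "n < m"
  shows "(\<forall>U\<in>set Us. unitary_on (2^m) U) \<Longrightarrow> v \<in> carrier_vec (2^m) \<Longrightarrow>
    run f m n v Us \<in> carrier_vec (2^m) \<and> nv (2^m) (run f m n v Us) = nv (2^m) v \<and>
    (\<forall>w\<in>set (sts f m n v Us). w \<in> carrier_vec (2^m) \<and> nv (2^m) w = nv (2^m) v) \<and>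
    length (sts f m n v Us) = length Us"
proof (induction Us arbitrary: v)
  case Nil
  then show ?case by simp
next
  case (Cons U Us)
  have U: "unitary_on (2^m) U" using Cons.prems by simp
  hence Uc: "U \<in> carrier_mat (2^m) (2^m)" unfolding unitary_on_def by simp
  let ?v = "U *\<^sub>v (QMQ m n f *\<^sub>v v)"
  have qv: "QMQ m n f *\<^sub>v v \<in> carrier_vec (2^m)" by (rule mult_mat_vec_carrier[OF QMQ_carrier Cons.prems(2)])
  have vc: "?v \<in> carrier_vec (2^m)" by (rule mult_mat_vec_carrier[OF Uc qv])
  have nvv: "nv (2^m) ?v = nv (2^m) v"
    using unitary_nv[OF U qv] QMQ_nv[OF nm Cons.prems(2)] by simp
  have all: "\<forall>U\<in>set Us. unitary_on (2^m) U" using Cons.prems(1) by simp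
  note IH = Cons.IH[OF all vc]
  have e1: "run f m n v (U # Us) = run f m n ?v Us" by simp
  have e2: "sts f m n v (U # Us) = v # sts f m n ?v Us" by simp
  show ?case unfolding e1 e2 using IH nvv Cons.prems(2) by auto
qed

lemma ineq_aux: "(x1::real) \<le> y1 + 2*s1 \<Longrightarrow> y1 \<le> z1 + 2*p1 \<Longrightarrow> x1 \<le> z1 + 2*(p1+s1)" by argo

lemma hybrid:
  assumes nm: "n < m"
  shows "(\<forall>U\<in>set Us. unitary_on (2^m) U) \<Longrightarrow> a \<in> carrier_vec (2^m) \<Longrightarrow> b \<in> carrier_vec (2^m) \<Longrightarrow>
    nv (2^m) (run c m n a Us - run f m n b Us)
      \<le> nv (2^m) (a - b) + 2 * sum_list (map (PS m n (\<lambda>x. c x \<noteq> f x)) (sts f m n b Us))"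
proof (induction Us arbitrary: a b)
  case Nil
  then show ?case by simp
next
  case (Cons U Us)
  have U: "unitary_on (2^m) U" using Cons.prems by simp
  hence Uc: "U \<in> carrier_mat (2^m) (2^m)" unfolding unitary_on_def by simp
  let ?a = "U *\<^sub>v (QMQ m n c *\<^sub>v a)" and ?b = "U *\<^sub>v (QMQ m n f *\<^sub>v b)"
  have ac: "?a \<in> carrier_vec (2^m)"
    by (rule mult_mat_vec_carrier[OF Uc mult_mat_vec_carrier[OF QMQ_carrier Cons.prems(2)]])
  have bc: "?b \<in> carrier_vec (2^m)"
    by (rule mult_mat_vec_carrier[OF Uc mult_mat_vec_carrier[OF QMQ_carrier Cons.prems(3)]])
  have qa: "QMQ m n c *\<^sub>v a \<in> carrier_vec (2^m)" by (rule mult_mat_vec_carrier[OF QMQ_carrier Cons.prems(2)])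
  have qb: "QMQ m n f *\<^sub>v b \<in> carrier_vec (2^m)" by (rule mult_mat_vec_carrier[OF QMQ_carrier Cons.prems(3)])
  have qd: "QMQ m n c *\<^sub>v a - QMQ m n f *\<^sub>v b \<in> carrier_vec (2^m)" using qa qb by simp
  have "?a - ?b = U *\<^sub>v (QMQ m n c *\<^sub>v a - QMQ m n f *\<^sub>v b)"
    by (rule mult_minus_distrib_mat_vec[OF Uc qa qb, symmetric])
  hence "nv (2^m) (?a - ?b) = nv (2^m) (QMQ m n c *\<^sub>v a - QMQ m n f *\<^sub>v b)"
    using unitary_nv[OF U qd] by simp
  also have "\<dots> \<le> nv (2^m) (a - b) + 2 * PS m n (\<lambda>x. c x \<noteq> f x) b"
    by (rule oracle_step[OF nm]) (use Cons.prems in auto)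
  finally have st: "nv (2^m) (?a - ?b) \<le> nv (2^m) (a - b) + 2 * PS m n (\<lambda>x. c x \<noteq> f x) b" .
  have "nv (2^m) (run c m n ?a Us - run f m n ?b Us)
      \<le> nv (2^m) (?a - ?b) + 2 * sum_list (map (PS m n (\<lambda>x. c x \<noteq> f x)) (sts f m n ?b Us))"
    by (rule Cons.IH[OF _ ac bc]) (use Cons.prems(1) in simp)
  then show ?case using st by (simp only: foldl_Cons sts.simps list.map sum_list.Cons) (erule ineq_aux, assumption)
qed



lemma swap_count:
  assumes "finite D"
  shows "(\<Sum>c\<in>D. \<Sum>i<N. if P c i then r i else 0) = (\<Sum>i<N. (r i :: real) * real (card {c\<in>D. P c i}))"
proof -
  have "(\<Sum>c\<in>D. \<Sum>i<N. if P c i then r i else 0) = (\<Sum>i<N. \<Sum>c\<in>D. if P c i then r i else 0)"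
    by (rule sum.swap)
  also have "\<dots> = (\<Sum>i<N. r i * real (card {c\<in>D. P c i}))"
  proof (rule sum.cong[OF refl])
    fix i
    have "(\<Sum>c\<in>D. if P c i then r i else 0) = (\<Sum>c\<in>{c\<in>D. P c i}. r i)"
      using sum.inter_filter[OF assms, of "\<lambda>_. r i" "\<lambda>c. P c i"] by simp
    also have "\<dots> = r i * real (card {c\<in>D. P c i})" by simp
    finally show "(\<Sum>c\<in>D. if P c i then r i else 0) = r i * real (card {c\<in>D. P c i})" .
  qed
  finally show ?thesis .
qed

lemma L2_sq: "(L2_set f A)\<^sup>2 = (\<Sum>i\<in>A. (f i)\<^sup>2)"
  unfolding L2_set_def by (simp add: sum_nonneg)

lemma PS_sq: "(PS m n S v)\<^sup>2 = (\<Sum>i<2^m. if S (i div 2^(m-n)) then (cmod (v $ i))\<^sup>2 else 0)"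
  unfolding PS_def L2_sq by (rule sum.cong) auto

lemma weight_bound:
  assumes fD: "finite D" and nm: "n < m"
    and cnt: "\<And>a. a < 2^n \<Longrightarrow> real (card {c\<in>D. c a \<noteq> cs a}) \<le> g * real (card D)"
  shows "(\<Sum>c\<in>D. (PS m n (\<lambda>x. c x \<noteq> cs x) w)\<^sup>2) \<le> g * real (card D) * (nv (2^m) w)\<^sup>2"
proof -
  have "(\<Sum>c\<in>D. (PS m n (\<lambda>x. c x \<noteq> cs x) w)\<^sup>2)
      = (\<Sum>i<2^m. (cmod (w $ i))\<^sup>2 * real (card {c\<in>D. c (i div 2^(m-n)) \<noteq> cs (i div 2^(m-n))}))"
    unfolding PS_sq by (rule swap_count[OF fD])
  also have "\<dots> \<le> (\<Sum>i<2^m. (cmod (w $ i))\<^sup>2 * (g * real (card D)))"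
    by (rule sum_mono, rule mult_left_mono) (use cnt div_lt[OF nm] in auto)
  also have "\<dots> = g * real (card D) * (nv (2^m) w)\<^sup>2"
    unfolding L2_sq by (simp add: sum_distrib_left sum_distrib_right mult_ac)
  finally show ?thesis .
qed

lemma cs_ineq:
  assumes "finite D" "\<And>c. c \<in> D \<Longrightarrow> q c \<ge> 0"
  shows "(\<Sum>c\<in>D. sqrt (q c)) \<le> sqrt (real (card D) * (\<Sum>c\<in>D. q c))"
proof -
  have "(\<Sum>c\<in>D. \<bar>sqrt (q c)\<bar> * \<bar>1\<bar>) \<le> L2_set (\<lambda>c. sqrt (q c)) D * L2_set (\<lambda>_. 1) D"
    by (rule L2_set_mult_ineq)
  moreover have "L2_set (\<lambda>c. sqrt (q c)) D = sqrt (\<Sum>c\<in>D. q c)"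
    unfolding L2_set_def using assms(2) by (simp cong: sum.cong)
  moreover have "L2_set (\<lambda>_. 1) D = sqrt (real (card D))" by (simp add: L2_set_constant)
  moreover have "(\<Sum>c\<in>D. \<bar>sqrt (q c)\<bar> * \<bar>1\<bar>) = (\<Sum>c\<in>D. sqrt (q c))"
    by (intro sum.cong refl) (simp add: assms(2))
  ultimately show ?thesis by (simp add: real_sqrt_mult mult.commute)
qed

lemma sum_list_map_sum:
  "(\<Sum>c\<in>D. sum_list (map (h c) ws)) = sum_list (map (\<lambda>w. \<Sum>c\<in>D. (h c w :: real)) ws)"
  by (induction ws) (simp_all add: sum.distrib)

lemma sum_list_bound:
  "(\<forall>w\<in>set ws. F w \<le> (B::real)) \<Longrightarrow> sum_list (map F ws) \<le> real (length ws) * B"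
  by (induction ws) (auto simp: algebra_simps)

lemma nv_unit: "0 < N \<Longrightarrow> nv N (unit_vec N 0) = 1"
proof -
  assume N: "0 < N"
  have "nv N (unit_vec N 0) = L2_set (\<lambda>i. if i = 0 then 1 else 0) {..<N}"
    by (rule L2_set_cong) auto
  also have "\<dots> = 1"
  proof -
    have "(\<Sum>i<N. (if i = 0 then 1 else 0::real)\<^sup>2) = (\<Sum>i<N. if i = 0 then 1 else 0)"
      by (rule sum.cong) auto
    thus ?thesis unfolding L2_set_def using N by simp
  qed
  finally show ?thesis .
qed

lemma nv_zero: "v \<in> carrier_vec N \<Longrightarrow> nv N (v - v) = 0"
  by (rule L2_set_0') auto



lemma t1: "2 \<le> card (C::'a set) \<Longrightarrow> finite C"
  by (rule ccontr) simp
lemma t2: "{gamma n C' | C'. C' \<subseteq> C \<and> 2 \<le> card C'} = (\<lambda>C'. gamma n C') ` {C'. C' \<subseteq> C \<and> 2 \<le> card C'}"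
  unfolding image_def by (rule Collect_cong) blast
lemma t3: "finite C \<Longrightarrow> finite {C'. C' \<subseteq> C \<and> 2 \<le> card C'}"
  by (rule finite_subset[of _ "Pow C"]) auto

lemma gamma_D:
  assumes Cc: "C \<subseteq> concepts n" and C2: "2 \<le> card C"
  shows "\<exists>D \<subseteq> C. 2 \<le> card D \<and> (\<forall>a<2^n. gamma_a D a \<le> gamma_hat n C)"
proof -
  have fC: "finite C" using C2 by (rule t1)
  let ?F = "{C'. C' \<subseteq> C \<and> 2 \<le> card C'}"
  have fF: "finite ?F" by (rule t3[OF fC])
  have eq: "{gamma n C' | C'. C' \<subseteq> C \<and> 2 \<le> card C'} = (\<lambda>C'. gamma n C') ` ?F" by (rule t2)
  have CF: "C \<in> ?F" using C2 by simp
  hence ne: "?F \<noteq> {}" by blast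
  have gh: "gamma_hat n C = Min ((\<lambda>C'. gamma n C') ` ?F)" unfolding gamma_hat_def eq ..
  have "Min ((\<lambda>C'. gamma n C') ` ?F) \<in> (\<lambda>C'. gamma n C') ` ?F"
  proof (rule Min_in)
    show "finite ((\<lambda>C'. gamma n C') ` ?F)" by (rule finite_imageI[OF fF])
    have "gamma n C \<in> (\<lambda>C'. gamma n C') ` ?F" by (rule imageI[OF CF])
    thus "(\<lambda>C'. gamma n C') ` ?F \<noteq> {}" by (metis equals0D)
  qed
  then obtain D where DF: "D \<in> ?F" and gD0: "Min ((\<lambda>C'. gamma n C') ` ?F) = gamma n D" by (rule imageE)
  have D: "D \<subseteq> C" "2 \<le> card D" using DF by simp_all
  have gD: "gamma n D = gamma_hat n C" using gD0 gh by simp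
  have "\<forall>a<2^n. gamma_a D a \<le> gamma_hat n C"
  proof (intro allI impI)
    fix a :: nat assume a: "a < 2^n"
    have eq2: "{gamma_a D a | a. a < (2::nat)^n} = gamma_a D ` {..<2^n}"
      unfolding image_def by (rule Collect_cong) auto
    have "gamma_a D a \<le> gamma n D" unfolding gamma_def eq2 by (rule Max_ge) (simp_all add: a)
    thus "gamma_a D a \<le> gamma_hat n C" using gD by simp
  qed
  thus ?thesis using D by (intro exI[of _ D]) simp
qed



lemma cnt_lemma:
  assumes fD: "finite D" and D0: "card D > 0" and ga: "gamma_a D a \<le> g"
  shows "real (card {c\<in>D. c a \<noteq> (card {c\<in>D. c a = False} \<le> card {c\<in>D. c a = True})}) \<le> g * real (card D)"
proof -
  let ?k0 = "card {c\<in>D. c a = False}" and ?k1 = "card {c\<in>D. c a = True}"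
  have "card {c\<in>D. c a \<noteq> (?k0 \<le> ?k1)} = min ?k0 ?k1"
  proof (cases "?k0 \<le> ?k1")
    case True
    then show ?thesis by simp
  next
    case False
    then show ?thesis by simp
  qed
  moreover have "gamma_a D a = real (min ?k0 ?k1) / real (card D)"
  proof (cases "?k0 \<le> ?k1")
    case True
    hence "real ?k0 / real (card D) \<le> real ?k1 / real (card D)"
      by (intro divide_right_mono) auto
    thus ?thesis using True unfolding gamma_a_def gamma_ab_def by (simp add: min_def)
  next
    case False
    hence "real ?k1 / real (card D) \<le> real ?k0 / real (card D)"
      by (intro divide_right_mono) auto
    thus ?thesis using False unfolding gamma_a_def gamma_ab_def by (simp add: min_def)
  qed
  ultimately show ?thesis using ga D0 by (simp add: divide_le_eq)
qed



lemma final_arith: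
  fixes k T s :: real
  assumes k2: "k \<ge> 2" and h: "k * sqrt (2/3) \<le> sqrt k + 2 * T * k * s"
  shows "1/20 \<le> T * s"
proof -
  have a1: "81/100 \<le> sqrt (2/3::real)" by (rule real_le_rsqrt) (simp add: power2_eq_square)
  have a2: "sqrt (1/2::real) \<le> 71/100" by (rule real_le_lsqrt) (simp_all add: power2_eq_square)
  have e1: "(sqrt k)\<^sup>2 = k" using k2 by simp
  have e3: "(sqrt (1/2::real))\<^sup>2 = 1/2" by simp
  have e2: "(k * sqrt (1/2))\<^sup>2 = k * k / 2" unfolding power_mult_distrib e3 by (simp add: power2_eq_square)
  have "k * 2 \<le> k * k" using k2 by (intro mult_left_mono) auto
  hence "(sqrt k)\<^sup>2 \<le> (k * sqrt (1/2))\<^sup>2" unfolding e1 e2 by simp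
  hence b: "sqrt k \<le> k * sqrt (1/2)"
    by (rule power2_le_imp_le) (use k2 in simp)
  have "k * (81/100) \<le> k * sqrt (2/3)" using a1 k2 by simp
  also have "\<dots> \<le> k * sqrt (1/2) + 2 * T * k * s" using h b by linarith
  also have "\<dots> \<le> k * (71/100) + 2 * T * k * s" using a2 k2 by simp
  finally have "k * (81/100) \<le> k * (71/100) + k * (2 * T * s)" by (simp add: mult_ac)
  hence "k * (10/100) \<le> k * (2 * T * s)" by (simp add: algebra_simps)
  hence "10/100 \<le> 2 * T * s" using k2 by simp
  thus ?thesis by simp
qed

lemma ifsq: "(if Q then a else 0::real)\<^sup>2 = (if Q then a\<^sup>2 else 0)" by simp

lemma main_bound:
  assumes Cc: "C \<subseteq> concepts n" and C2: "2 \<le> card C" and L: "exactly_learns n C m Us dec"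
  shows "1/20 \<le> real (queries Us) * sqrt (gamma_hat n C)"
proof -
  obtain D where DC: "D \<subseteq> C" and D2: "2 \<le> card D" and gD: "\<forall>a<2^n. gamma_a D a \<le> gamma_hat n C"
    using gamma_D[OF Cc C2] by blast
  define g where "g = gamma_hat n C"
  have fD: "finite D" using D2 by (rule t1)
  have D0: "card D > 0" using D2 by simp
  define cs where "cs = (\<lambda>a. card {c\<in>D. c a = False} \<le> card {c\<in>D. c a = True})"
  have cnt: "\<And>a. a < 2^n \<Longrightarrow> real (card {c\<in>D. c a \<noteq> cs a}) \<le> g * real (card D)"
  proof -
    fix a :: nat assume a: "a < 2^n"
    have "gamma_a D a \<le> g" using gD a g_def by simp
    thus "real (card {c\<in>D. c a \<noteq> cs a}) \<le> g * real (card D)"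
      unfolding cs_def by (rule cnt_lemma[OF fD D0])
  qed
  have nm: "n < m" and Une: "Us \<noteq> []" and unit: "\<forall>U\<in>set Us. unitary_on (2^m) U"
    and succ: "\<forall>c\<in>C. success_prob m n c Us dec \<ge> 2/3"
    using L unfolding exactly_learns_def valid_network_def by auto
  obtain U0 Vs where Us: "Us = U0 # Vs" using Une by (cases Us) auto
  have U0: "unitary_on (2^m) U0" using unit Us by simp
  have U0c: "U0 \<in> carrier_mat (2^m) (2^m)" using U0 unfolding unitary_on_def by simp
  have allV: "\<forall>U\<in>set Vs. unitary_on (2^m) U" using unit Us by simp
  have T: "queries Us = length Vs" unfolding queries_def Us by simp
  have uc: "unit_vec (2^m) 0 \<in> carrier_vec (2^m)" by simp
  define e where "e = U0 *\<^sub>v unit_vec (2^m) 0"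
  have ec: "e \<in> carrier_vec (2^m)" unfolding e_def by (rule mult_mat_vec_carrier[OF U0c uc])
  have ne: "nv (2^m) e = 1" unfolding e_def unitary_nv[OF U0 uc] by (rule nv_unit) simp
  have fs: "\<And>c. final_state m n c Us = run c m n e Vs" unfolding final_state_def Us e_def by simp
  define ps where "ps = run cs m n e Vs"
  define ws where "ws = sts cs m n e Vs"
  have RP: "ps \<in> carrier_vec (2^m) \<and> nv (2^m) ps = 1 \<and> (\<forall>w\<in>set ws. w \<in> carrier_vec (2^m) \<and> nv (2^m) w = 1)
      \<and> length ws = length Vs"
    using run_props[OF nm allV ec, of cs] ne unfolding ps_def ws_def by simp
  define d where "d = (\<lambda>c. nv (2^m) (run c m n e Vs - ps))"
  have dle: "\<And>c. d c \<le> 2 * sum_list (map (PS m n (\<lambda>x. c x \<noteq> cs x)) ws)"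
  proof -
    fix c
    show "d c \<le> 2 * sum_list (map (PS m n (\<lambda>x. c x \<noteq> cs x)) ws)"
      using hybrid[OF nm allV ec ec, of c cs] nv_zero[OF ec] unfolding d_def ps_def ws_def by simp
  qed
  have wb: "\<And>w. w \<in> set ws \<Longrightarrow> (\<Sum>c\<in>D. PS m n (\<lambda>x. c x \<noteq> cs x) w) \<le> real (card D) * sqrt g"
  proof -
    fix w assume w: "w \<in> set ws"
    have nw: "nv (2^m) w = 1" using RP w by simp
    have "(\<Sum>c\<in>D. PS m n (\<lambda>x. c x \<noteq> cs x) w) = (\<Sum>c\<in>D. sqrt ((PS m n (\<lambda>x. c x \<noteq> cs x) w)\<^sup>2))"
      by (intro sum.cong refl) (simp add: PS_def)
    also have "\<dots> \<le> sqrt (real (card D) * (\<Sum>c\<in>D. (PS m n (\<lambda>x. c x \<noteq> cs x) w)\<^sup>2))"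
      by (rule cs_ineq[OF fD]) simp
    also have "\<dots> \<le> sqrt (real (card D) * (g * real (card D) * (nv (2^m) w)\<^sup>2))"
      by (intro real_sqrt_le_mono mult_left_mono weight_bound[OF fD nm cnt]) simp_all
    also have "\<dots> = sqrt ((real (card D) * real (card D)) * g)"
      unfolding nw by (simp add: mult_ac)
    also have "\<dots> = sqrt (real (card D) * real (card D)) * sqrt g"
      by (rule real_sqrt_mult)
    also have "\<dots> = real (card D) * sqrt g" by simp
    finally show "(\<Sum>c\<in>D. PS m n (\<lambda>x. c x \<noteq> cs x) w) \<le> real (card D) * sqrt g" .
  qed
  have sumd: "(\<Sum>c\<in>D. d c) \<le> 2 * real (length Vs) * real (card D) * sqrt g"
  proof -
    have "(\<Sum>c\<in>D. d c) \<le> (\<Sum>c\<in>D. 2 * sum_list (map (PS m n (\<lambda>x. c x \<noteq> cs x)) ws))"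
      by (rule sum_mono) (rule dle)
    also have "\<dots> = 2 * sum_list (map (\<lambda>w. \<Sum>c\<in>D. PS m n (\<lambda>x. c x \<noteq> cs x) w) ws)"
      unfolding sum_distrib_left[symmetric] using sum_list_map_sum[of "\<lambda>c. PS m n (\<lambda>x. c x \<noteq> cs x)" ws D]
      by simp
    also have "\<dots> \<le> 2 * (real (length ws) * (real (card D) * sqrt g))"
      using sum_list_bound[of ws "\<lambda>w. \<Sum>c\<in>D. PS m n (\<lambda>x. c x \<noteq> cs x) w" "real (card D) * sqrt g"] wb
      by simp
    finally show ?thesis using RP by (simp add: mult_ac)
  qed
  define P where "P = (\<lambda>c i. \<forall>x<2^n. dec i x = (c x :: bool))"
  define p where "p = (\<lambda>c. \<Sum>i<2^m. if P c i then (cmod (ps $ i))\<^sup>2 else 0)"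
  have sp: "\<And>c. c \<in> D \<Longrightarrow> sqrt (2/3) \<le> sqrt (p c) + d c"
  proof -
    fix c assume c: "c \<in> D"
    let ?pc = "run c m n e Vs"
    have s1: "2/3 \<le> success_prob m n c Us dec" using succ c DC by auto
    have s2: "success_prob m n c Us dec = (L2_set (\<lambda>i. if P c i then cmod (?pc $ i) else 0) {..<2^m})\<^sup>2"
      unfolding success_prob_def L2_sq fs P_def ifsq ..
    have s3: "L2_set (\<lambda>i. if P c i then cmod (?pc $ i) else 0) {..<2^m}
        \<le> L2_set (\<lambda>i. (if P c i then cmod (ps $ i) else 0) + cmod ((?pc - ps) $ i)) {..<2^m}"
    proof (rule L2_set_mono)
      fix i :: nat assume "i \<in> {..<2^m}" hence i: "i < 2^m" by simp
      have dps: "dim_vec ps = 2^m" using RP by (intro carrier_vecD) simp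
      have "(?pc - ps) $ i = ?pc $ i - ps $ i" using i dps by simp
      moreover have "cmod (?pc $ i) \<le> cmod (ps $ i) + cmod (?pc $ i - ps $ i)" by (rule norm_triangle_sub)
      ultimately show "(if P c i then cmod (?pc $ i) else 0) \<le> (if P c i then cmod (ps $ i) else 0) + cmod ((?pc - ps) $ i)"
        by auto
    qed simp
    have s4: "L2_set (\<lambda>i. (if P c i then cmod (ps $ i) else 0) + cmod ((?pc - ps) $ i)) {..<2^m}
        \<le> L2_set (\<lambda>i. if P c i then cmod (ps $ i) else 0) {..<2^m} + d c"
      unfolding d_def by (rule L2_set_triangle_ineq)
    have s5: "L2_set (\<lambda>i. if P c i then cmod (ps $ i) else 0) {..<2^m} = sqrt (p c)"
      unfolding p_def L2_set_def by (intro arg_cong[where f=sqrt] sum.cong refl) simp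
    have "sqrt (2/3) \<le> sqrt (success_prob m n c Us dec)" using s1 by simp
    also have "\<dots> = L2_set (\<lambda>i. if P c i then cmod (?pc $ i) else 0) {..<2^m}" unfolding s2 by simp
    finally show "sqrt (2/3) \<le> sqrt (p c) + d c" using s3 s4 s5 by linarith
  qed
  have psum: "(\<Sum>c\<in>D. p c) \<le> 1"
  proof -
    have "(\<Sum>c\<in>D. p c) = (\<Sum>i<2^m. (cmod (ps $ i))\<^sup>2 * real (card {c\<in>D. P c i}))"
      unfolding p_def by (rule swap_count[OF fD])
    also have "\<dots> \<le> (\<Sum>i<2^m. (cmod (ps $ i))\<^sup>2 * 1)"
    proof (rule sum_mono, rule mult_left_mono)
      fix i
      have fi: "finite {c\<in>D. P c i}" using fD by simp
      have "\<forall>c1\<in>{c\<in>D. P c i}. \<forall>c2\<in>{c\<in>D. P c i}. c1 = c2"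
      proof (intro ballI)
        fix c1 c2 assume h1: "c1 \<in> {c\<in>D. P c i}" and h2: "c2 \<in> {c\<in>D. P c i}"
        have k1: "c1 \<in> concepts n" and k2: "c2 \<in> concepts n" using h1 h2 DC Cc by auto
        show "c1 = c2"
        proof
          fix x
          show "c1 x = c2 x"
          proof (cases "x < 2^n")
            case True thus ?thesis using h1 h2 unfolding P_def by auto
          next
            case False thus ?thesis using k1 k2 unfolding concepts_def by auto
          qed
        qed
      qed
      hence "card {c\<in>D. P c i} \<le> Suc 0" using card_le_Suc0_iff_eq[OF fi] by blast
      thus "real (card {c\<in>D. P c i}) \<le> 1" by simp
    qed simp
    also have "\<dots> = (nv (2^m) ps)\<^sup>2" unfolding L2_sq by simp
    also have "\<dots> = 1" using RP by simp
    finally show ?thesis .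
  qed
  have "(\<Sum>c\<in>D. sqrt (2/3)) \<le> (\<Sum>c\<in>D. sqrt (p c) + d c)" by (rule sum_mono) (rule sp)
  hence h1: "real (card D) * sqrt (2/3) \<le> (\<Sum>c\<in>D. sqrt (p c)) + (\<Sum>c\<in>D. d c)"
    by (simp add: sum.distrib)
  have "(\<Sum>c\<in>D. sqrt (p c)) \<le> sqrt (real (card D) * (\<Sum>c\<in>D. p c))"
    by (rule cs_ineq[OF fD]) (simp add: p_def sum_nonneg)
  also have "\<dots> \<le> sqrt (real (card D) * 1)"
    by (intro real_sqrt_le_mono mult_left_mono psum) simp
  finally have h2: "(\<Sum>c\<in>D. sqrt (p c)) \<le> sqrt (real (card D))" by simp
  have "real (card D) * sqrt (2/3) \<le> sqrt (real (card D)) + 2 * real (length Vs) * real (card D) * sqrt g"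
    using h1 h2 sumd by linarith
  hence "1/20 \<le> real (length Vs) * sqrt g"
    by (rule final_arith[rotated]) (use D2 in simp)
  thus ?thesis unfolding T g_def .
qed


theorem theorem7:
  shows "\<exists>\<kappa>::real. \<kappa> > 0 \<and>
    (\<forall>n C m Us dec. C \<subseteq> concepts n \<longrightarrow> 2 \<le> card C \<longrightarrow> exactly_learns n C m Us dec \<longrightarrow>
       real (queries Us) \<ge> \<kappa> * sqrt (1 / gamma_hat n C))"
proof (intro exI[of _ "1/20::real"] conjI allI impI)
  show "(0::real) < 1/20" by simp
next
  fix n C m Us dec
  assume Cc: "C \<subseteq> concepts n" and C2: "2 \<le> card C" and L: "exactly_learns n C m Us dec"
  have mb: "1/20 \<le> real (queries Us) * sqrt (gamma_hat n C)" by (rule main_bound[OF Cc C2 L])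
  show "1/20 * sqrt (1 / gamma_hat n C) \<le> real (queries Us)"
  proof (cases "gamma_hat n C > 0")
    case True
    have "1/20 * sqrt (1 / gamma_hat n C) = (1/20) / sqrt (gamma_hat n C)"
      by (simp add: real_sqrt_divide)
    also have "\<dots> \<le> real (queries Us)" using mb True by (simp add: pos_divide_le_eq)
    finally show ?thesis .
  next
    case False
    hence "1 / gamma_hat n C \<le> 0" by simp
    hence "sqrt (1 / gamma_hat n C) \<le> 0" by simp
    hence "1/20 * sqrt (1 / gamma_hat n C) \<le> 0" by simp
    moreover have "0 \<le> real (queries Us)" by simp
    ultimately show ?thesis by linarith
  qed
qed

end
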